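(* Let $C'>1$ and $c_\beta>1$, and suppose $F: (0,\infty) \to [0,\infty)$ satisfies $$F(t) \leq C' \frac{F(t-c_\beta s)}{s}$$ for all $t,s$ with $c_\beta^{-1} t \geq s \geq 1$. If $F(t) \leq 1/t$ for every $t>0$, then there exist constants $c,C>0$ such that $F(t) \leq C \exp(-c t)$ for every $t\geq c_\beta$. *)

theory Defs
  imports "HOL-Analysis.Analysis"
begin

end

theory Submission
  imports Defs
begin

theorem lemma4p1:
  fixes F :: "real \<Rightarrow> real" and C' c\<^sub>\<beta> :: real
  assumes "C' > 1" and "c\<^sub>\<beta> > 1"
    and nonneg: "\<And>t. t > 0 \<Longrightarrow> F t \<ge> 0"
    and rec: "\<And>t s. s \<ge> 1 \<Longrightarrow> t / c\<^sub>\<beta> \<ge> s \<Longrightarrow> t - c\<^sub>\<beta> * s > 0 \<Longrightarrow>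
                F t \<le> C' * F (t - c\<^sub>\<beta> * s) / s"
    and bound: "\<And>t. t > 0 \<Longrightarrow> F t \<le> 1 / t"
  shows "\<exists>c C. c > 0 \<and> C > 0 \<and> (\<forall>t. t \<ge> c\<^sub>\<beta> \<longrightarrow> F t \<le> C * exp (- c * t))"
proof -
  define S where "S = 2 * C'"
  define L where "L = c\<^sub>\<beta> * S"
  define a where "a = ln (2::real)"
  have S1: "S \<ge> 1" using assms(1) by (simp add: S_def)
  have Lpos: "L > 0" using assms(1,2) by (simp add: L_def S_def)
  have apos: "a > 0" by (simp add: a_def)
  have step: "F t \<le> F (t - L) / 2" if "t \<ge> L" "t - L > 0" for t
  proof -
    have "t / c\<^sub>\<beta> \<ge> S" using that assms(2) by (simp add: L_def field_simps)
    then have "F t \<le> C' * F (t - c\<^sub>\<beta> * S) / S" using rec[OF S1] that by (simp add: L_def)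
    also have "\<dots> = F (t - L) / 2" using assms(1) by (simp add: S_def L_def)
    finally show ?thesis .
  qed
  have claim: "\<forall>t. c\<^sub>\<beta> + real n * L \<le> t \<longrightarrow> t < c\<^sub>\<beta> + (real n + 1) * L \<longrightarrow> F t \<le> exp (- real n * a)" for n :: nat
  proof (induction n)
    case 0
    show ?case
    proof (intro allI impI)
      fix t :: real assume "c\<^sub>\<beta> + real 0 * L \<le> t"
      then have t: "t \<ge> c\<^sub>\<beta>" by simp
      then have "F t \<le> 1 / t" using bound assms(2) by simp
      also have "\<dots> \<le> 1" using t assms(2) by simp
      finally show "F t \<le> exp (- real 0 * a)" by simp
    qed
  next
    case (Suc n)
    show ?case
    proof (intro allI impI)
      fix t :: real
      assume h1: "c\<^sub>\<beta> + real (Suc n) * L \<le> t" and h2: "t < c\<^sub>\<beta> + (real (Suc n) + 1) * L"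
      have "L * real n \<ge> 0" using Lpos by simp
      moreover have "c\<^sub>\<beta> + real (Suc n) * L = L + (c\<^sub>\<beta> + L * real n)" by (simp add: algebra_simps)
      ultimately have "t \<ge> L" "t - L > 0" using h1 Lpos assms(2) by linarith+
      then have "F t \<le> F (t - L) / 2" by (rule step)
      also have "F (t - L) \<le> exp (- real n * a)"
        using Suc.IH h1 h2 by (auto simp: algebra_simps)
      then have "F (t - L) / 2 \<le> exp (- real n * a) / 2" by simp
      also have "exp (- real n * a) / 2 = exp (- real (Suc n) * a)"
      proof -
        have "exp (- real (Suc n) * a) = exp (- real n * a) * exp (- a)"
          by (simp add: algebra_simps exp_add[symmetric])
        moreover have "exp (- a) = 1 / 2" by (simp add: a_def exp_minus)
        ultimately show ?thesis by simp
      qed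
      finally show "F t \<le> exp (- real (Suc n) * a)" .
    qed
  qed
  show ?thesis
  proof (intro exI conjI allI impI)
    show "a / L > 0" using apos Lpos by simp
    show "exp (a * (c\<^sub>\<beta> / L + 1)) > 0" by simp
    fix t assume t: "c\<^sub>\<beta> \<le> t"
    define n where "n = nat \<lfloor>(t - c\<^sub>\<beta>) / L\<rfloor>"
    have q: "(t - c\<^sub>\<beta>) / L \<ge> 0" using t Lpos by simp
    have n1: "real n \<le> (t - c\<^sub>\<beta>) / L" using q by (simp add: n_def)
    have n2: "(t - c\<^sub>\<beta>) / L < real n + 1" using q by (simp add: n_def)
    have "c\<^sub>\<beta> + real n * L \<le> t" using n1 Lpos by (simp add: field_simps)
    moreover have "t < c\<^sub>\<beta> + (real n + 1) * L" using n2 Lpos by (simp add: field_simps)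
    ultimately have "F t \<le> exp (- real n * a)" using claim by blast
    also have "\<dots> \<le> exp (a * (c\<^sub>\<beta> / L + 1)) * exp (- (a / L) * t)"
    proof -
      have "- real n * a \<le> a * (c\<^sub>\<beta> / L + 1) + (- (a / L) * t)"
      proof -
        have hn: "- real n \<le> (c\<^sub>\<beta> - t) / L + 1" using n2 by (simp add: diff_divide_distrib)
        then have "- real n * a \<le> ((c\<^sub>\<beta> - t) / L + 1) * a" using mult_right_mono[OF hn, of a] apos by simp
        moreover have "((c\<^sub>\<beta> - t) / L + 1) * a = a * (c\<^sub>\<beta> / L + 1) + (- (a / L) * t)" by (simp add: algebra_simps diff_divide_distrib)
        ultimately show ?thesis by linarith
      qed
      thus ?thesis by (simp add: exp_add[symmetric])
    qed
    finally show "F t \<le> exp (a * (c\<^sub>\<beta> / L + 1)) * exp (- (a / L) * t)" .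
  qed
qed

end
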